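(* Let $\mathfrak h=\mathfrak{su}(p',q')$ with $0<p'<q'$, with restricted root data as in the context, and let $\mathfrak h^0\subset\mathfrak h$ be a subalgebra invariant under $\mathrm{ad}\,\mathfrak b_H$. Then: (1) if $\mathfrak a_H\subset\mathfrak h^0$, then $\mathfrak b_H\subset\mathfrak h^0$; (2) for $i',j'$ (possibly equal), if $\mathfrak h_{-\alpha_{i'}-\alpha_{j'}}\cap\mathfrak h^0\ne0$, then $\mathfrak h_{-\alpha_{i'}}\subset\mathfrak h^0$; (3) if $p'\ge2$, $i'\ne j'$, $\mathfrak h_{-\alpha_{i'}}\subset\mathfrak h^0$ and $\mathfrak h_{-\alpha_{j'}}\cap\mathfrak h^0\ne0$, then $\mathfrak h_{-\alpha_{j'}}\subset\mathfrak h^0$.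
   Context: $\mathfrak a_H$ is a maximal $\mathbf R$-split abelian subalgebra of $\mathfrak h$; the restricted root system is $BC_{p'}$, with short roots $\alpha_1,\dots,\alpha_{p'}\in\mathfrak a_H^*$ chosen so that the positive roots are $\{\alpha_{k'}\}\cup\{\alpha_{i'}-\alpha_{j'}:i'<j'\}\cup\{\alpha_{i'}+\alpha_{j'}\}$ (the last including $2\alpha_{i'}$). Root spaces: $\dim\mathfrak h_{\pm\alpha_{k'}}=2(q'-p')$, $\dim\mathfrak h_{\pm\alpha_{i'}\pm\alpha_{j'}}=2$ for $i'\ne j'$, $\dim\mathfrak h_{\pm2\alpha_{i'}}=1$. $\mathfrak b_H=\mathfrak a_H\oplus\bigoplus_{\alpha>0}\mathfrak h_\alpha$ (Borel subalgebra; the compact part of the centralizer of $\mathfrak a_H$ is omitted from $\mathfrak b_H$ here). *)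

theory Defs
  imports Complex_Main "HOL-Library.Function_Algebras"
begin

text \<open>Matrices of size n x n over the complex numbers are represented as functions
  nat => nat => complex, supported on indices below n.
  Basis ordering: indices 0..p-1 are e_1..e_p, indices p..q-1 are f_1..f_(q-p),
  indices q..q+p-1 are e'_1..e'_p. The hermitian form S pairs e_i with e'_i
  (hyperbolic planes) and is -1 on the f_k, so it has signature (p,q).\<close>

type_synonym cmat = "nat \<Rightarrow> nat \<Rightarrow> complex"

definition inmat :: "nat \<Rightarrow> cmat \<Rightarrow> bool" where
  "inmat n X \<longleftrightarrow> (\<forall>i j. (n \<le> i \<or> n \<le> j) \<longrightarrow> X i j = 0)"

definition ctrans :: "cmat \<Rightarrow> cmat" where
  "ctrans X = (\<lambda>i j. cnj (X j i))"

definition mmul :: "nat \<Rightarrow> cmat \<Rightarrow> cmat \<Rightarrow> cmat" where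
  "mmul n A B = (\<lambda>i j. \<Sum>k<n. A i k * B k j)"

definition bracket :: "nat \<Rightarrow> cmat \<Rightarrow> cmat \<Rightarrow> cmat" where
  "bracket n X Y = mmul n X Y - mmul n Y X"

definition rsmult :: "real \<Rightarrow> cmat \<Rightarrow> cmat" where
  "rsmult r X = (\<lambda>i j. complex_of_real r * X i j)"

definition formS :: "nat \<Rightarrow> nat \<Rightarrow> cmat" where
  "formS p q = (\<lambda>i j.
     if i < p \<and> j = q + i then 1
     else if j < p \<and> i = q + j then 1
     else if p \<le> i \<and> i < q \<and> i = j then -1
     else 0)"

definition su :: "nat \<Rightarrow> nat \<Rightarrow> cmat set" where
  "su p q = {X. inmat (p+q) X
               \<and> mmul (p+q) (ctrans X) (formS p q) + mmul (p+q) (formS p q) X = 0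
               \<and> (\<Sum>i<p+q. X i i) = 0}"

definition diagA :: "nat \<Rightarrow> nat \<Rightarrow> (nat \<Rightarrow> real) \<Rightarrow> cmat" where
  "diagA p q t = (\<lambda>i j. if i = j \<and> i < p then complex_of_real (t i)
                        else if i = j \<and> q \<le> i \<and> i < q + p then - complex_of_real (t (i - q))
                        else 0)"

definition aH :: "nat \<Rightarrow> nat \<Rightarrow> cmat set" where
  "aH p q = range (diagA p q)"

text \<open>Elements of a_H^* given by integer coefficient vectors c w.r.t. alpha_1..alpha_p:
  the functional sends diagA t to sum_i c_i t_i.\<close>
definition rootval :: "nat \<Rightarrow> (nat \<Rightarrow> int) \<Rightarrow> (nat \<Rightarrow> real) \<Rightarrow> real" where
  "rootval p c t = (\<Sum>i<p. real_of_int (c i) * t i)"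

definition rootsp :: "nat \<Rightarrow> nat \<Rightarrow> (nat \<Rightarrow> int) \<Rightarrow> cmat set" where
  "rootsp p q c = {X \<in> su p q. \<forall>t. bracket (p+q) (diagA p q t) X = rsmult (rootval p c t) X}"

text \<open>alpha_i (0-based index i < p).\<close>
definition alpha :: "nat \<Rightarrow> nat \<Rightarrow> int" where
  "alpha i = (\<lambda>k. if k = i then 1 else 0)"

definition posroots :: "nat \<Rightarrow> (nat \<Rightarrow> int) set" where
  "posroots p = {alpha k | k. k < p}
              \<union> {alpha i - alpha j | i j. i < j \<and> j < p}
              \<union> {alpha i + alpha j | i j. i \<le> j \<and> j < p}"

definition bH :: "nat \<Rightarrow> nat \<Rightarrow> cmat set" where
  "bH p q = {H + (\<Sum>c\<in>posroots p. X c) | H X.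
               H \<in> aH p q \<and> (\<forall>c\<in>posroots p. X c \<in> rootsp p q c)}"

definition subalgebra :: "nat \<Rightarrow> nat \<Rightarrow> cmat set \<Rightarrow> bool" where
  "subalgebra p q A \<longleftrightarrow> A \<subseteq> su p q \<and> 0 \<in> A
     \<and> (\<forall>X\<in>A. \<forall>Y\<in>A. X + Y \<in> A)
     \<and> (\<forall>r. \<forall>X\<in>A. rsmult r X \<in> A)
     \<and> (\<forall>X\<in>A. \<forall>Y\<in>A. bracket (p+q) X Y \<in> A)"

end

theory Submission
  imports Defs
begin

definition sig :: "nat \<Rightarrow> nat \<Rightarrow> nat \<Rightarrow> nat" where
  "sig p q a = (if a < p then q + a else if a < q then a else a - q)"
definition sg :: "nat \<Rightarrow> nat \<Rightarrow> nat \<Rightarrow> complex" where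
  "sg p q a = (if a < p then 1 else if a < q then -1 else if a < q + p then 1 else 0)"

lemma fun_app_simps:
  "(F - G) a = F a - G a" "(- F) a = - F a" "(0::'a\<Rightarrow>'b::zero) a = 0"
  by auto

lemma formS_alt: assumes "p < q" shows "formS p q a k = (if k = sig p q a then sg p q a else 0)"
  using assms unfolding formS_def sig_def sg_def by auto

lemma formS_sym: "formS p q a k = formS p q k a" unfolding formS_def by auto

lemma mmul_S_left: assumes "p<q"
  shows "mmul (p+q) (formS p q) X a b = sg p q a * X (sig p q a) b"
proof -
  have "mmul (p+q) (formS p q) X a b = (\<Sum>k<p+q. if k = sig p q a then sg p q a * X k b else 0)"
    unfolding mmul_def using formS_alt[OF assms] by (intro sum.cong) auto
  also have "\<dots> = (if sig p q a < p+q then sg p q a * X (sig p q a) b else 0)"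
    by (simp add: sum.delta)
  also have "\<dots> = sg p q a * X (sig p q a) b" using assms by (auto simp: sig_def sg_def)
  finally show ?thesis .
qed

lemma mmul_S_right: assumes "p<q"
  shows "mmul (p+q) (ctrans X) (formS p q) a b = cnj (X (sig p q b) a) * sg p q b"
proof -
  have "mmul (p+q) (ctrans X) (formS p q) a b = (\<Sum>k<p+q. if k = sig p q b then cnj (X k a) * sg p q b else 0)"
  proof -
    have e: "\<And>k. formS p q k b = (if k = sig p q b then sg p q b else 0)"
      using formS_alt[OF assms] formS_sym by metis
    show ?thesis unfolding mmul_def ctrans_def by (intro sum.cong) (auto simp: e)
  qed
  also have "\<dots> = (if sig p q b < p+q then cnj (X (sig p q b) a) * sg p q b else 0)"
    by (simp add: sum.delta)
  also have "\<dots> = cnj (X (sig p q b) a) * sg p q b" using assms by (auto simp: sig_def sg_def)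
  finally show ?thesis .
qed

lemma su_cond: assumes "p<q" "M \<in> su p q"
  shows "cnj (M (sig p q b) a) * sg p q b + sg p q a * M (sig p q a) b = 0"
proof -
  have "(mmul (p+q) (ctrans M) (formS p q) + mmul (p+q) (formS p q) M) a b = 0"
    using assms(2) unfolding su_def by auto
  thus ?thesis using mmul_S_left[OF assms(1)] mmul_S_right[OF assms(1)] by simp
qed

lemma su_intro: assumes "p<q" "inmat (p+q) M"
  "\<And>a b. cnj (M (sig p q b) a) * sg p q b + sg p q a * M (sig p q a) b = 0"
  "(\<Sum>i<p+q. M i i) = 0"
  shows "M \<in> su p q"
proof -
  have "mmul (p+q) (ctrans M) (formS p q) + mmul (p+q) (formS p q) M = 0"
    using assms(3) mmul_S_left[OF assms(1)] mmul_S_right[OF assms(1)] by (auto simp: fun_eq_iff)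
  thus ?thesis using assms unfolding su_def by auto
qed

lemma mmul_diag_left: "mmul (p+q) (diagA p q t) X a b = diagA p q t a a * X a b"
proof -
  have "mmul (p+q) (diagA p q t) X a b = (\<Sum>k<p+q. if k = a then diagA p q t a a * X k b else 0)"
    unfolding mmul_def by (intro sum.cong) (auto simp: diagA_def)
  also have "\<dots> = diagA p q t a a * X a b" by (auto simp: sum.delta diagA_def)
  finally show ?thesis .
qed

lemma mmul_diag_right: "mmul (p+q) X (diagA p q t) a b = X a b * diagA p q t b b"
proof -
  have "mmul (p+q) X (diagA p q t) a b = (\<Sum>k<p+q. if k = b then X a k * diagA p q t b b else 0)"
    unfolding mmul_def by (intro sum.cong) (auto simp: diagA_def)
  also have "\<dots> = X a b * diagA p q t b b" by (auto simp: sum.delta diagA_def)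
  finally show ?thesis .
qed

lemma bracket_diag: "bracket (p+q) (diagA p q t) X a b = (diagA p q t a a - diagA p q t b b) * X a b"
  unfolding bracket_def by (simp add: mmul_diag_left mmul_diag_right algebra_simps)

lemma rootsp_intro: assumes "M \<in> su p q"
  "\<And>a b t. M a b \<noteq> 0 \<Longrightarrow> diagA p q t a a - diagA p q t b b = of_real (rootval p c t)"
  shows "M \<in> rootsp p q c"
  unfolding rootsp_def using assms
  by (auto simp: fun_eq_iff bracket_diag rsmult_def)

lemma rootsp_dest: assumes "M \<in> rootsp p q c" "M a b \<noteq> 0"
  shows "diagA p q t a a - diagA p q t b b = of_real (rootval p c t)"
proof -
  have "bracket (p+q) (diagA p q t) M a b = rsmult (rootval p c t) M a b"
    using assms(1) unfolding rootsp_def by auto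
  thus ?thesis using assms(2) by (simp add: bracket_diag rsmult_def)
qed

lemma rootsp_su: "M \<in> rootsp p q c \<Longrightarrow> M \<in> su p q" unfolding rootsp_def by auto

lemma rootsp_inmat: "M \<in> rootsp p q c \<Longrightarrow> M a b \<noteq> 0 \<Longrightarrow> a < p+q \<and> b < p+q"
  unfolding rootsp_def su_def inmat_def by (metis (mono_tags, lifting) mem_Collect_eq not_le)

definition dk :: "nat \<Rightarrow> nat \<Rightarrow> real" where "dk k = (\<lambda>i. if i = k then 1 else 0)"

lemma rootval_dk: "k < p \<Longrightarrow> rootval p c (dk k) = of_int (c k)"
  unfolding rootval_def dk_def by (simp add: if_distrib sum.delta cong: if_cong)

lemma rootval_negi: assumes "i < p" shows "rootval p (- alpha i) t = - t i"
proof -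
  have "rootval p (- alpha i) t = (\<Sum>k<p. if k = i then - t i else 0)"
    unfolding rootval_def alpha_def by (intro sum.cong) auto
  thus ?thesis using assms by (simp add: sum.delta)
qed
lemma rootval_posi: assumes "i < p" shows "rootval p (alpha i) t = t i"
proof -
  have "rootval p (alpha i) t = (\<Sum>k<p. if k = i then t i else 0)"
    unfolding rootval_def alpha_def by (intro sum.cong) auto
  thus ?thesis using assms by (simp add: sum.delta)
qed
lemma rootval_negij: assumes "i < p" "j < p" shows "rootval p (- (alpha i + alpha j)) t = - (t i + t j)"
proof -
  have "rootval p (- (alpha i + alpha j)) t = (\<Sum>k<p. (if k = i then - t i else 0) + (if k = j then - t j else 0))"
    unfolding rootval_def alpha_def by (intro sum.cong) (auto simp: algebra_simps)
  thus ?thesis using assms by (simp add: sum.delta sum.distrib)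
qed

definition negI :: "nat \<Rightarrow> nat \<Rightarrow> nat \<Rightarrow> (nat \<Rightarrow> complex) \<Rightarrow> cmat" where
  "negI p q i u = (\<lambda>a b. if p \<le> a \<and> a < q \<and> b = i then u a
     else if a = q + i \<and> p \<le> b \<and> b < q then cnj (u b) else 0)"
definition negIJ :: "nat \<Rightarrow> nat \<Rightarrow> nat \<Rightarrow> nat \<Rightarrow> complex \<Rightarrow> cmat" where
  "negIJ p q i j x = (\<lambda>a b. if a = q + i \<and> b = j then x
     else if a = q + j \<and> b = i then - cnj x else 0)"
definition posI :: "nat \<Rightarrow> nat \<Rightarrow> nat \<Rightarrow> (nat \<Rightarrow> complex) \<Rightarrow> cmat" where
  "posI p q j A = (\<lambda>a b. if a = j \<and> p \<le> b \<and> b < q then A b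
     else if p \<le> a \<and> a < q \<and> b = q + j then cnj (A a) else 0)"

definition dv :: "nat \<Rightarrow> nat \<Rightarrow> nat \<Rightarrow> nat \<Rightarrow> real" where
  "dv p q k a = (if a < p \<and> a = k then 1 else if q \<le> a \<and> a < q + p \<and> a - q = k then -1 else 0)"

lemma diag_dk: "p < q \<Longrightarrow> diagA p q (dk k) a a = of_real (dv p q k a)"
  unfolding diagA_def dk_def dv_def by auto

lemma dv_1: assumes "p < q" shows "dv p q k a = 1 \<longleftrightarrow> a < p \<and> a = k" using assms unfolding dv_def by auto
lemma dv_m1: assumes "p < q" shows "dv p q k a = -1 \<longleftrightarrow> q \<le> a \<and> a < q + p \<and> a - q = k" using assms unfolding dv_def by auto
lemma dv_ii: "i < p \<Longrightarrow> dv p q i i = 1" "i < p \<Longrightarrow> p < q \<Longrightarrow> dv p q i (q+i) = -1" unfolding dv_def by auto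
lemma dv_cases: "dv p q k a = 1 \<or> dv p q k a = -1 \<or> dv p q k a = 0" unfolding dv_def by auto

lemma supp_negi: assumes "p<q" "i<p" "M \<in> rootsp p q (- alpha i)" "M a b \<noteq> 0"
  shows "(p \<le> a \<and> a < q \<and> b = i) \<or> (a = q + i \<and> p \<le> b \<and> b < q)"
proof -
  have ab: "a < p+q" "b < p+q" using rootsp_inmat[OF assms(3,4)] by auto
  have h1: "dv p q k a - dv p q k b = - dk k i" for k
    using rootsp_dest[OF assms(3,4), of "dk k"] rootval_negi[OF assms(2)] diag_dk[OF assms(1)]
    by (metis of_real_diff of_real_eq_iff)
  have ii: "dv p q i a - dv p q i b = -1" using h1[of i] by (simp add: dk_def)
  then consider "dv p q i a = 0" "dv p q i b = 1" | "dv p q i a = -1" "dv p q i b = 0"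
    using dv_cases[of p q i a] dv_cases[of p q i b] by auto
  then show ?thesis
  proof cases
    case 1
    have "b = i" using 1 dv_1[OF assms(1)] by auto
    moreover have "a \<noteq> i" "a \<noteq> q + i" using 1 dv_ii[of i p q] assms by auto
    ultimately have b: "b = i" "a \<noteq> i" "a \<noteq> q + i" by auto
    have "\<not> a < p"
    proof
      assume "a < p"
      hence "dv p q a a = 1" using dv_1[OF assms(1)] by auto
      moreover have "dv p q a b \<noteq> 1" using b dv_1[OF assms(1)] by auto
      ultimately show False using h1[of a] b dv_cases[of p q a b] by (auto simp: dk_def)
    qed
    moreover have "\<not> q \<le> a"
    proof
      assume "q \<le> a"
      hence "dv p q (a-q) a = -1" using dv_m1[OF assms(1)] ab by auto
      moreover have "dv p q (a-q) b \<noteq> -1" using b assms dv_m1[OF assms(1)] by auto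
      moreover have "a - q \<noteq> i" using b \<open>q \<le> a\<close> by auto
      ultimately show False using h1[of "a-q"] b dv_cases[of p q "a-q" b] by (auto simp: dk_def)
    qed
    ultimately show ?thesis using b by auto
  next
    case 2
    have "a = q + i" using 2 dv_m1[OF assms(1)] ab assms by auto
    moreover have "b \<noteq> i" "b \<noteq> q + i" using 2 dv_ii[of i p q] assms by auto
    ultimately have b: "a = q + i" "b \<noteq> i" "b \<noteq> q + i" by auto
    have "\<not> b < p"
    proof
      assume "b < p"
      hence "dv p q b b = 1" using dv_1[OF assms(1)] by auto
      moreover have "dv p q b a \<noteq> 1" using b dv_1[OF assms(1)] by auto
      moreover have "dk b i = 0" using b by (auto simp: dk_def)
      ultimately show False using h1[of b] b dv_cases[of p q b a] by auto
    qed
    moreover have "\<not> q \<le> b"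
    proof
      assume "q \<le> b"
      hence "dv p q (b-q) b = -1" using dv_m1[OF assms(1)] ab by auto
      moreover have "dv p q (b-q) a \<noteq> -1" using b assms dv_m1[OF assms(1)] \<open>q \<le> b\<close> by auto
      moreover have "b - q \<noteq> i" using b \<open>q \<le> b\<close> by auto
      ultimately show False using h1[of "b-q"] b dv_cases[of p q "b-q" a] by (auto simp: dk_def)
    qed
    ultimately show ?thesis using b by auto
  qed
qed

lemma supp_negij: assumes "p<q" "i<p" "j<p" "M \<in> rootsp p q (- (alpha i + alpha j))" "M a b \<noteq> 0"
  shows "(a = q + i \<and> b = j) \<or> (a = q + j \<and> b = i)"
proof -
  have ab: "a < p+q" "b < p+q" using rootsp_inmat[OF assms(4,5)] by auto
  have h1: "dv p q k a - dv p q k b = - (dk k i + dk k j)" for k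
    using rootsp_dest[OF assms(4,5), of "dk k"] rootval_negij[OF assms(2,3)] diag_dk[OF assms(1)]
    by (metis of_real_diff of_real_eq_iff)
  have gen: "dv p q k a = -1 \<or> dv p q k b = 1" if "dv p q k a - dv p q k b \<le> -1" for k
    using that dv_cases[of p q k a] dv_cases[of p q k b] by auto
  have "dv p q i a - dv p q i b \<le> -1" using h1[of i] by (auto simp: dk_def)
  hence A: "a = q + i \<or> b = i" using gen dv_1[OF assms(1)] dv_m1[OF assms(1)] ab by fastforce
  have "dv p q j a - dv p q j b \<le> -1" using h1[of j] by (auto simp: dk_def)
  hence B: "a = q + j \<or> b = j" using gen dv_1[OF assms(1)] dv_m1[OF assms(1)] ab by fastforce
  show ?thesis
  proof (cases "i = j")
    case True
    hence "dv p q i a - dv p q i b = -2" using h1[of i] by (simp add: dk_def)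
    hence "dv p q i a = -1" "dv p q i b = 1" using dv_cases[of p q i a] dv_cases[of p q i b] by auto
    thus ?thesis using True dv_1[OF assms(1)] dv_m1[OF assms(1)] ab by auto
  next
    case False
    thus ?thesis using A B by auto
  qed
qed

lemma negI_char: assumes "p<q" "i<p" "M \<in> rootsp p q (- alpha i)"
  shows "M = negI p q i (\<lambda>m. M m i)"
proof -
  have rel: "M (q+i) b = cnj (M b i)" if "p \<le> b" "b < q" for b
  proof -
    have "cnj (M (q + i) b) = M b i"
      using su_cond[OF assms(1) rootsp_su[OF assms(3)], of i b] that assms
      by (auto simp: sig_def sg_def)
    thus ?thesis by (metis complex_cnj_cnj)
  qed
  show ?thesis
  proof (intro ext)
    fix a b
    show "M a b = negI p q i (\<lambda>m. M m i) a b"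
    proof (cases "p \<le> a \<and> a < q \<and> b = i")
      case True
      thus ?thesis unfolding negI_def by simp
    next
      case F1: False
      show ?thesis
      proof (cases "a = q + i \<and> p \<le> b \<and> b < q")
        case True
        have "negI p q i (\<lambda>m. M m i) a b = cnj (M b i)" unfolding negI_def by (simp only: if_not_P[OF F1] if_P[OF True])
        thus ?thesis using rel True by simp
      next
        case False
        have "negI p q i (\<lambda>m. M m i) a b = 0" unfolding negI_def by (simp only: if_not_P[OF F1] if_not_P[OF False])
        moreover have "M a b = 0" using supp_negi[OF assms, of a b] F1 False by blast
        ultimately show ?thesis by simp
      qed
    qed
  qed
qed

lemma negIJ_char: assumes "p<q" "i<p" "j<p" "M \<in> rootsp p q (- (alpha i + alpha j))"
  shows "M = negIJ p q i j (M (q+i) j) \<and> cnj (M (q+i) j) = - M (q+j) i"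
proof -
  have rel: "cnj (M (q+i) j) = - M (q+j) i"
  proof -
    have "M (q+i) j + cnj (M (q+j) i) = 0"
      using su_cond[OF assms(1) rootsp_su[OF assms(4)], of j i] assms
      by (auto simp: sig_def sg_def algebra_simps)
    hence "cnj (M (q+i) j + cnj (M (q+j) i)) = 0" by simp
    thus ?thesis by (simp add: add_eq_0_iff)
  qed
  have "M = negIJ p q i j (M (q+i) j)"
  proof (intro ext)
    fix a b
    show "M a b = negIJ p q i j (M (q+i) j) a b"
    proof (cases "a = q + i \<and> b = j")
      case True
      have "negIJ p q i j (M (q+i) j) a b = M (q+i) j" unfolding negIJ_def by (simp only: if_P[OF True])
      thus ?thesis using True by simp
    next
      case F1: False
      show ?thesis
      proof (cases "a = q + j \<and> b = i")
        case True
        have "negIJ p q i j (M (q+i) j) a b = - cnj (M (q+i) j)" unfolding negIJ_def by (simp only: if_not_P[OF F1] if_P[OF True])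
        thus ?thesis using rel True by (metis minus_minus)
      next
        case False
        have "negIJ p q i j (M (q+i) j) a b = 0" unfolding negIJ_def by (simp only: if_not_P[OF F1] if_not_P[OF False])
        moreover have "M a b = 0" using supp_negij[OF assms, of a b] F1 False by blast
        ultimately show ?thesis by simp
      qed
    qed
  qed
  thus ?thesis using rel by auto
qed

lemma negI_in: assumes "p<q" "i<p" shows "negI p q i u \<in> rootsp p q (- alpha i)"
proof (rule rootsp_intro)
  show "negI p q i u \<in> su p q"
  proof (rule su_intro[OF assms(1)])
    show "inmat (p + q) (negI p q i u)" using assms unfolding inmat_def negI_def by auto
    show "(\<Sum>k<p + q. negI p q i u k k) = 0" using assms unfolding negI_def by (intro sum.neutral) auto
    fix a b
    show "cnj (negI p q i u (sig p q b) a) * sg p q b + sg p q a * negI p q i u (sig p q a) b = 0"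
      using assms unfolding negI_def sig_def sg_def by auto
  qed
  fix a b t
  assume "negI p q i u a b \<noteq> 0"
  hence "(p \<le> a \<and> a < q \<and> b = i) \<or> (a = q + i \<and> p \<le> b \<and> b < q)" unfolding negI_def by (auto split: if_splits)
  thus "diagA p q t a a - diagA p q t b b = complex_of_real (rootval p (- alpha i) t)"
    using assms by (auto simp: rootval_negi diagA_def)
qed

lemma posI_in: assumes "p<q" "j<p" shows "posI p q j A \<in> rootsp p q (alpha j)"
proof (rule rootsp_intro)
  show "posI p q j A \<in> su p q"
  proof (rule su_intro[OF assms(1)])
    show "inmat (p + q) (posI p q j A)" using assms unfolding inmat_def posI_def by auto
    show "(\<Sum>k<p + q. posI p q j A k k) = 0" using assms unfolding posI_def by (intro sum.neutral) auto
    fix a b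
    show "cnj (posI p q j A (sig p q b) a) * sg p q b + sg p q a * posI p q j A (sig p q a) b = 0"
      using assms unfolding posI_def sig_def sg_def by auto
  qed
  fix a b t
  assume "posI p q j A a b \<noteq> 0"
  hence "(a = j \<and> p \<le> b \<and> b < q) \<or> (p \<le> a \<and> a < q \<and> b = q + j)" unfolding posI_def by (auto split: if_splits)
  thus "diagA p q t a a - diagA p q t b b = complex_of_real (rootval p (alpha j) t)"
    using assms by (auto simp: rootval_posi diagA_def)
qed

lemma negIJ_in: assumes "p<q" "i<p" "j<p" "i \<noteq> j" shows "negIJ p q i j x \<in> rootsp p q (- (alpha i + alpha j))"
proof (rule rootsp_intro)
  show "negIJ p q i j x \<in> su p q"
  proof (rule su_intro[OF assms(1)])
    show "inmat (p + q) (negIJ p q i j x)" using assms unfolding inmat_def negIJ_def by auto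
    show "(\<Sum>k<p + q. negIJ p q i j x k k) = 0" using assms unfolding negIJ_def by (intro sum.neutral) auto
    fix a b
    show "cnj (negIJ p q i j x (sig p q b) a) * sg p q b + sg p q a * negIJ p q i j x (sig p q a) b = 0"
      using assms unfolding negIJ_def sig_def sg_def by auto
  qed
  fix a b t
  assume "negIJ p q i j x a b \<noteq> 0"
  hence "(a = q + i \<and> b = j) \<or> (a = q + j \<and> b = i)" unfolding negIJ_def by (auto split: if_splits)
  thus "diagA p q t a a - diagA p q t b b = complex_of_real (rootval p (- (alpha i + alpha j)) t)"
    using assms rootval_negij[OF assms(2,3), of t] by (auto simp: diagA_def)
qed

lemma br1: assumes "p<q" "i<p" "j<p" "i = j \<longrightarrow> cnj x = - x" "x \<noteq> 0"
  shows "bracket (p+q) (posI p q j (\<lambda>m. - cnj (u m) / x)) (negIJ p q i j x) = negI p q i u"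
proof (intro ext)
  fix a b
  define A where "A = (\<lambda>m. - cnj (u m) / x)"
  let ?Y = "posI p q j A" and ?X = "negIJ p q i j x"
  have XY: "?X (q+j) b = (if b = i then - cnj x else 0)"
  proof (cases "i = j")
    case True
    hence "cnj x = - x" using assms(4) by blast
    hence "- cnj x = x" by simp
    thus ?thesis using True unfolding negIJ_def by simp
  next
    case False
    thus ?thesis unfolding negIJ_def by simp
  qed
  have YX: "?Y a (q+j) = (if p \<le> a \<and> a < q then cnj (A a) else 0)" using assms(1,3) unfolding posI_def by simp
  have XJ: "?X a j = (if a = q + i then x else 0)"
  proof (cases "i = j")
    case True
    thus ?thesis unfolding negIJ_def by simp
  next
    case False
    thus ?thesis unfolding negIJ_def by auto
  qed
  have YJ: "?Y j b = (if p \<le> b \<and> b < q then A b else 0)" using assms(1,3) unfolding posI_def by simp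
  have m1: "mmul (p+q) ?Y ?X a b = ?Y a (q+j) * ?X (q+j) b"
  proof -
    have "mmul (p+q) ?Y ?X a b = (\<Sum>k<p+q. if k = q+j then ?Y a (q+j) * ?X (q+j) b else 0)"
      unfolding mmul_def
    proof (intro sum.cong refl)
      fix k assume "k \<in> {..<p+q}"
      show "?Y a k * ?X k b = (if k = q+j then ?Y a (q+j) * ?X (q+j) b else 0)"
      proof (cases "k = q + j")
        case False
        have "?X k b = 0 \<or> ?Y a k = 0" using False assms(1,2,3) unfolding negIJ_def posI_def by auto
        thus ?thesis using False by auto
      qed simp
    qed
    also have "\<dots> = ?Y a (q+j) * ?X (q+j) b" using assms by (simp add: sum.delta)
    finally show ?thesis .
  qed
  have m2: "mmul (p+q) ?X ?Y a b = ?X a j * ?Y j b"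
  proof -
    have "mmul (p+q) ?X ?Y a b = (\<Sum>k<p+q. if k = j then ?X a j * ?Y j b else 0)"
      unfolding mmul_def
    proof (intro sum.cong refl)
      fix k assume "k \<in> {..<p+q}"
      show "?X a k * ?Y k b = (if k = j then ?X a j * ?Y j b else 0)"
      proof (cases "k = j")
        case False
        have "?X a k = 0 \<or> ?Y k b = 0" using False assms(1,2,3) unfolding negIJ_def posI_def by auto
        thus ?thesis using False by auto
      qed simp
    qed
    also have "\<dots> = ?X a j * ?Y j b" using assms by (simp add: sum.delta)
    finally show ?thesis .
  qed
  have cx: "cnj x \<noteq> 0" using assms by simp
  have "bracket (p+q) ?Y ?X a b = (if p \<le> a \<and> a < q then cnj (A a) else 0) * (if b = i then - cnj x else 0)
     - (if a = q + i then x else 0) * (if p \<le> b \<and> b < q then A b else 0)"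
    unfolding bracket_def using m1 m2 XY YX XJ YJ by simp
  also have "\<dots> = negI p q i u a b"
  proof -
    have cA: "cnj (A m) = - u m / cnj x" for m unfolding A_def by simp
    show ?thesis
    proof (cases "p \<le> a \<and> a < q \<and> b = i")
      case True
      hence "a \<noteq> q + i" by auto
      thus ?thesis using True cx unfolding negI_def cA by (simp add: field_simps)
    next
      case F1: False
      show ?thesis
      proof (cases "a = q + i \<and> p \<le> b \<and> b < q")
        case True
        hence "\<not> (p \<le> a \<and> a < q)" by auto
        thus ?thesis using True F1 assms(5) unfolding negI_def A_def by (simp add: field_simps)
      next
        case False
        thus ?thesis using F1 unfolding negI_def by auto
      qed
    qed
  qed
  finally show "bracket (p+q) ?Y ?X a b = negI p q i u a b" unfolding A_def .
qed

lemma sum_if_const: "(\<Sum>k\<in>S. if P then g k else 0) = (if P then sum g S else 0)"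
  by (cases P) simp_all

lemma br2: assumes "p<q" "i<p" "j<p" "i \<noteq> j"
  shows "bracket (p+q) (negI p q i u) (negI p q j u)
     = negIJ p q i j (of_real (\<Sum>k<p+q. if p \<le> k \<and> k < q then (cmod (u k))^2 else 0))"
proof (intro ext)
  fix a b
  let ?W = "negI p q i u" and ?X = "negI p q j u"
  define f where "f = (\<lambda>k. if p \<le> k \<and> k < q then complex_of_real ((cmod (u k))^2) else 0)"
  define sr where "sr = (\<Sum>k<p+q. if p \<le> k \<and> k < q then (cmod (u k))^2 else 0)"
  have fs: "(\<Sum>k<p+q. f k) = of_real sr" unfolding f_def sr_def by (simp add: of_real_sum if_distrib cong: if_cong)
  have nsq: "cnj (u k) * u k = complex_of_real ((cmod (u k))^2)" for k
    by (simp add: complex_norm_square[symmetric] mult.commute)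
  have m1: "mmul (p+q) ?W ?X a b = (if a = q + i \<and> b = j then of_real sr else 0)"
  proof -
    have "mmul (p+q) ?W ?X a b = (\<Sum>k<p+q. if a = q + i \<and> b = j then f k else 0)"
      unfolding mmul_def
    proof (intro sum.cong refl)
      fix k assume "k \<in> {..<p+q}"
      show "?W a k * ?X k b = (if a = q + i \<and> b = j then f k else 0)"
        using assms unfolding negI_def f_def by (auto simp: nsq)
    qed
    also have "\<dots> = (if a = q + i \<and> b = j then of_real sr else 0)" by (simp only: sum_if_const fs)
    finally show ?thesis .
  qed
  have m2: "mmul (p+q) ?X ?W a b = (if a = q + j \<and> b = i then of_real sr else 0)"
  proof -
    have "mmul (p+q) ?X ?W a b = (\<Sum>k<p+q. if a = q + j \<and> b = i then f k else 0)"
      unfolding mmul_def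
    proof (intro sum.cong refl)
      fix k assume "k \<in> {..<p+q}"
      show "?X a k * ?W k b = (if a = q + j \<and> b = i then f k else 0)"
        using assms unfolding negI_def f_def by (auto simp: nsq)
    qed
    also have "\<dots> = (if a = q + j \<and> b = i then of_real sr else 0)" by (simp only: sum_if_const fs)
    finally show ?thesis .
  qed
  show "bracket (p+q) ?W ?X a b = negIJ p q i j (of_real sr) a b"
  proof -
    have "bracket (p+q) ?W ?X a b = (if a = q + i \<and> b = j then of_real sr else 0)
       - (if a = q + j \<and> b = i then of_real sr else 0)"
      unfolding bracket_def by (simp add: m1 m2)
    also have "\<dots> = negIJ p q i j (of_real sr) a b" using assms(4) unfolding negIJ_def by auto
    finally show ?thesis .
  qed
qed

lemma diag_zero: "diagA p q (\<lambda>_. 0) = 0" unfolding diagA_def by (auto simp: fun_eq_iff)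

lemma zero_rootsp: assumes "p<q" shows "0 \<in> rootsp p q c"
proof (rule rootsp_intro)
  show "0 \<in> su p q" by (rule su_intro[OF assms]) (auto simp: inmat_def)
qed simp

lemma finite_posroots: "finite (posroots p)"
proof -
  have "posroots p \<subseteq> alpha ` {..<p} \<union> (\<lambda>(i,j). alpha i - alpha j) ` ({..<p} \<times> {..<p})
      \<union> (\<lambda>(i,j). alpha i + alpha j) ` ({..<p} \<times> {..<p})"
    unfolding posroots_def by force
  thus ?thesis by (rule finite_subset) auto
qed

lemma root_in_bH: assumes "p<q" "c \<in> posroots p" "X \<in> rootsp p q c" shows "X \<in> bH p q"
proof -
  let ?Xf = "\<lambda>c'. if c' = c then X else 0"
  have "sum ?Xf (posroots p) = X" using assms(2) finite_posroots by (simp add: sum.delta')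
  hence "X = diagA p q (\<lambda>_. 0) + sum ?Xf (posroots p)" by (simp add: diag_zero)
  moreover have "diagA p q (\<lambda>_. 0) \<in> aH p q" unfolding aH_def by simp
  moreover have "\<forall>c'\<in>posroots p. ?Xf c' \<in> rootsp p q c'" using assms zero_rootsp by auto
  ultimately show ?thesis unfolding bH_def by blast
qed

lemma alpha_pos: "j < p \<Longrightarrow> alpha j \<in> posroots p" unfolding posroots_def by blast

lemma posroot_nz: assumes "c \<in> posroots p" shows "\<exists>k<p. c k \<noteq> 0"
  using assms unfolding posroots_def alpha_def by auto

lemma sum_in_sub: assumes "subalgebra p q A" "\<forall>c\<in>S. f c \<in> A" shows "sum f S \<in> A"
proof (cases "finite S")
  case True
  thus ?thesis using assms(2)
  proof (induction S rule: finite_induct)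
    case empty
    have "0 \<in> A" using assms(1) unfolding subalgebra_def by blast
    thus ?case by (simp only: sum.empty)
  next
    case (insert x F)
    hence "f x \<in> A" "sum f F \<in> A" by auto
    hence "f x + sum f F \<in> A" using assms(1) unfolding subalgebra_def by blast
    moreover have "sum f (insert x F) = f x + sum f F" by (rule sum.insert[OF insert(1,2)])
    ultimately show ?case by (simp only:)
  qed
next
  case False
  have "0 \<in> A" using assms(1) unfolding subalgebra_def by blast
  moreover have "sum f S = 0" by (rule sum.infinite[OF False])
  ultimately show ?thesis by (simp only:)
qed

lemma bracket_anti: "bracket n X Y = - bracket n Y X" unfolding bracket_def by simp

lemma part1: assumes "p<q" "subalgebra p q h0" "\<forall>Y\<in>bH p q. \<forall>X\<in>h0. bracket (p+q) Y X \<in> h0"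
  "aH p q \<subseteq> h0" shows "bH p q \<subseteq> h0"
proof
  fix Z assume "Z \<in> bH p q"
  then obtain H Xf where Z: "Z = H + (\<Sum>c\<in>posroots p. Xf c)" "H \<in> aH p q"
    "\<forall>c\<in>posroots p. Xf c \<in> rootsp p q c" unfolding bH_def mem_Collect_eq by metis
  have xin: "Xf c \<in> h0" if c: "c \<in> posroots p" for c
  proof -
    obtain k where k: "k < p" "c k \<noteq> 0" using posroot_nz[OF c] by blast
    let ?X = "Xf c" and ?D = "diagA p q (dk k)"
    have Xr: "?X \<in> rootsp p q c" using Z(3) c by blast
    have "?D \<in> h0" using assms(4) unfolding aH_def by blast
    hence b: "bracket (p+q) ?X ?D \<in> h0" using assms(3) root_in_bH[OF assms(1) c Xr] by blast
    have "bracket (p+q) ?D ?X = rsmult (rootval p c (dk k)) ?X" using Xr unfolding rootsp_def by blast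
    hence e0: "bracket (p+q) ?D ?X = rsmult (of_int (c k)) ?X" by (simp only: rootval_dk[OF k(1)])
    have e: "bracket (p+q) ?X ?D = - rsmult (of_int (c k)) ?X"
      by (subst bracket_anti) (simp only: e0)
    have "rsmult (- 1 / of_int (c k)) (bracket (p+q) ?X ?D) = ?X"
      unfolding e using k(2) by (simp add: rsmult_def fun_eq_iff fun_Compl_def)
    moreover have "rsmult (- 1 / of_int (c k)) (bracket (p+q) ?X ?D) \<in> h0"
      using b assms(2) unfolding subalgebra_def by blast
    ultimately show ?thesis by simp
  qed
  have "\<forall>c\<in>posroots p. Xf c \<in> h0" using xin by blast
  hence "sum Xf (posroots p) \<in> h0" by (rule sum_in_sub[OF assms(2)])
  moreover have "H \<in> h0" using Z(2) assms(4) by blast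
  ultimately have "H + sum Xf (posroots p) \<in> h0" using assms(2) unfolding subalgebra_def by blast
  thus "Z \<in> h0" using Z(1) by simp
qed

lemma part2: assumes "p<q" "subalgebra p q h0" "\<forall>Y\<in>bH p q. \<forall>X\<in>h0. bracket (p+q) Y X \<in> h0"
  "i<p" "j<p" "X \<in> rootsp p q (- (alpha i + alpha j))" "X \<in> h0" "X \<noteq> 0"
  shows "rootsp p q (- alpha i) \<subseteq> h0"
proof
  fix Z assume Zr: "Z \<in> rootsp p q (- alpha i)"
  define x where "x = X (q+i) j"
  have XX: "X = negIJ p q i j x" "cnj x = - X (q+j) i"
    using negIJ_char[OF assms(1,4,5,6)] unfolding x_def by auto
  have rel: "i = j \<longrightarrow> cnj x = - x" using XX(2) unfolding x_def by auto
  have xnz: "x \<noteq> 0"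
  proof
    assume "x = 0"
    hence "X = 0" using XX(1) unfolding negIJ_def by (auto simp: fun_eq_iff)
    thus False using assms(8) by blast
  qed
  have ZZ: "Z = negI p q i (\<lambda>m. Z m i)" using negI_char[OF assms(1,4) Zr] .
  let ?Y = "posI p q j (\<lambda>m. - cnj (Z m i) / x)"
  have "?Y \<in> bH p q" using root_in_bH[OF assms(1) alpha_pos[OF assms(5)] posI_in[OF assms(1,5)]] .
  hence "bracket (p+q) ?Y X \<in> h0" using assms(3,7) by blast
  moreover have "bracket (p+q) ?Y X = Z"
    using br1[OF assms(1,4,5) rel xnz, of "\<lambda>m. Z m i"] XX(1) ZZ by simp
  ultimately show "Z \<in> h0" by simp
qed

lemma part3: assumes "p<q" "subalgebra p q h0" "\<forall>Y\<in>bH p q. \<forall>X\<in>h0. bracket (p+q) Y X \<in> h0"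
  "i<p" "j<p" "i \<noteq> j" "rootsp p q (- alpha i) \<subseteq> h0"
  "X \<in> rootsp p q (- alpha j)" "X \<in> h0" "X \<noteq> 0"
  shows "rootsp p q (- alpha j) \<subseteq> h0"
proof -
  define u where "u = (\<lambda>m. X m j)"
  have XX: "X = negI p q j u" using negI_char[OF assms(1,5,8)] unfolding u_def .
  obtain k where k: "p \<le> k" "k < q" "u k \<noteq> 0"
  proof -
    obtain a b where "X a b \<noteq> 0" using assms(10) by (auto simp: fun_eq_iff)
    hence "(p \<le> a \<and> a < q \<and> b = j \<and> u a \<noteq> 0) \<or> (p \<le> b \<and> b < q \<and> u b \<noteq> 0)"
      unfolding XX negI_def by (auto split: if_splits)
    thus ?thesis using that by blast
  qed
  define sr where "sr = (\<Sum>k<p+q. if p \<le> k \<and> k < q then (cmod (u k))^2 else 0)"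
  have "(if p \<le> k \<and> k < q then (cmod (u k))^2 else 0) \<le> sr"
    unfolding sr_def by (rule member_le_sum) (use k in auto)
  hence s1: "(cmod (u k))^2 \<le> sr" using k by simp
  have "0 < (cmod (u k))^2" using k(3) by simp
  hence srpos: "sr > 0" using s1 by linarith
  have W: "negI p q i u \<in> h0" using assms(7) negI_in[OF assms(1,4)] by blast
  have "bracket (p+q) (negI p q i u) X \<in> h0" using W assms(2,9) unfolding subalgebra_def by blast
  hence N: "negIJ p q i j (of_real sr) \<in> h0" using br2[OF assms(1,4,5,6), of u] XX unfolding sr_def by simp
  have Nr: "negIJ p q i j (of_real sr) \<in> rootsp p q (- (alpha j + alpha i))"
    using negIJ_in[OF assms(1,4,5,6)] by (simp add: add.commute)
  have Nnz: "negIJ p q i j (of_real sr) \<noteq> 0"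
  proof
    assume "negIJ p q i j (of_real sr) = 0"
    hence "negIJ p q i j (of_real sr) (q+i) j = 0" by simp
    thus False using srpos unfolding negIJ_def by simp
  qed
  show ?thesis using part2[OF assms(1,2,3,5,4) Nr N Nnz] .
qed

theorem mainTheorem6:
  fixes p q :: nat and h0 :: "cmat set"
  assumes "0 < p" and "p < q"
    and "subalgebra p q h0"
    and "\<forall>Y\<in>bH p q. \<forall>X\<in>h0. bracket (p+q) Y X \<in> h0"
  shows "(aH p q \<subseteq> h0 \<longrightarrow> bH p q \<subseteq> h0)
       \<and> (\<forall>i<p. \<forall>j<p. (\<exists>X\<in>rootsp p q (- (alpha i + alpha j)) \<inter> h0. X \<noteq> 0)
              \<longrightarrow> rootsp p q (- alpha i) \<subseteq> h0)
       \<and> (2 \<le> p \<longrightarrow> (\<forall>i<p. \<forall>j<p. i \<noteq> j \<longrightarrow> rootsp p q (- alpha i) \<subseteq> h0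
              \<longrightarrow> (\<exists>X\<in>rootsp p q (- alpha j) \<inter> h0. X \<noteq> 0)
              \<longrightarrow> rootsp p q (- alpha j) \<subseteq> h0))"
proof (intro conjI)
  show "aH p q \<subseteq> h0 \<longrightarrow> bH p q \<subseteq> h0" using part1[OF assms(2,3,4)] by blast
  show "\<forall>i<p. \<forall>j<p. (\<exists>X\<in>rootsp p q (- (alpha i + alpha j)) \<inter> h0. X \<noteq> 0)
              \<longrightarrow> rootsp p q (- alpha i) \<subseteq> h0"
  proof (intro allI impI)
    fix i j assume ij: "i < p" "j < p" and ex: "\<exists>X\<in>rootsp p q (- (alpha i + alpha j)) \<inter> h0. X \<noteq> 0"
    then obtain X where X: "X \<in> rootsp p q (- (alpha i + alpha j))" "X \<in> h0" "X \<noteq> 0" by blast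
    show "rootsp p q (- alpha i) \<subseteq> h0" by (rule part2[OF assms(2,3,4) ij X])
  qed
  show "2 \<le> p \<longrightarrow> (\<forall>i<p. \<forall>j<p. i \<noteq> j \<longrightarrow> rootsp p q (- alpha i) \<subseteq> h0
              \<longrightarrow> (\<exists>X\<in>rootsp p q (- alpha j) \<inter> h0. X \<noteq> 0)
              \<longrightarrow> rootsp p q (- alpha j) \<subseteq> h0)"
  proof (intro allI impI)
    fix i j assume ij: "i < p" "j < p" "i \<noteq> j" and sub: "rootsp p q (- alpha i) \<subseteq> h0"
      and ex: "\<exists>X\<in>rootsp p q (- alpha j) \<inter> h0. X \<noteq> 0"
    then obtain X where X: "X \<in> rootsp p q (- alpha j)" "X \<in> h0" "X \<noteq> 0" by blast
    show "rootsp p q (- alpha j) \<subseteq> h0" by (rule part3[OF assms(2,3,4) ij sub X])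
  qed
qed

end
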